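(* Let $1\le r\le 8$, let $k$ be a positive integer, let $D\in|k(3H-E_1-\dots-E_r)|$ be an effective divisor on $\mathbb{S}_r$ and let $Q\in\mathbb{S}_r$. Write $f(D)$ for the image plane curve (of degree $3k$). If $Q\in E_1\cup\dots\cup E_r$, then $$\mathrm{mult}_Q(D)\le 2\,\mathrm{mult}_{f(Q)}(f(D))-k.$$ If $Q\notin E_1\cup\dots\cup E_r$, then $$\mathrm{mult}_Q(D)=\mathrm{mult}_{f(Q)}(f(D))\le 3k,$$ and if equality $\mathrm{mult}_Q(D)=3k$ holds, then $f(D)$ is a union of lines through $f(Q)$.
   Context: Let $P_1,\dots,P_r\in\mathbb{P}^2(\mathbb{C})$ be $r$ general points and $f\colon\mathbb{S}_r\to\mathbb{P}^2$ the blow-up at them, with exceptional curves $E_i=f^{-1}(P_i)$; $H$ is the pullback of the class of a line. For a divisor $D\in|k(3H-E_1-\dots-E_r)|$, $f(D)$ denotes the plane curve $f_*D$ of degree $3k$, so that $D=f^*(f(D))-kE_1-\dots-kE_r$. *)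

theory Defs
  imports Complex_Main
begin

text \<open>Points of P^2 are nonzero triples of complex numbers (up to scaling).
  A plane curve of degree d is given by a nonzero homogeneous polynomial of degree d,
  represented as a polynomial function of three complex variables.\<close>

type_synonym pt3 = "complex \<times> complex \<times> complex"
type_synonym form3 = "complex \<Rightarrow> complex \<Rightarrow> complex \<Rightarrow> complex"

definition hom_poly :: "nat \<Rightarrow> form3 \<Rightarrow> bool" where
  "hom_poly d F \<longleftrightarrow> (\<exists>c :: nat \<Rightarrow> nat \<Rightarrow> complex.
     F = (\<lambda>x y z. \<Sum>(i,j)\<in>{(i,j). i + j \<le> d}. c i j * x ^ i * y ^ j * z ^ (d - i - j)))"

definition eval3 :: "form3 \<Rightarrow> pt3 \<Rightarrow> complex" where
  "eval3 F p = (case p of (x, y, z) \<Rightarrow> F x y z)"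

definition proj_eq :: "pt3 \<Rightarrow> pt3 \<Rightarrow> bool" where
  "proj_eq p q \<longleftrightarrow> p \<noteq> (0,0,0) \<and> q \<noteq> (0,0,0) \<and>
     (\<exists>c. c \<noteq> 0 \<and> fst q = c * fst p \<and> fst (snd q) = c * fst (snd p)
                  \<and> snd (snd q) = c * snd (snd p))"

definition poly2 :: "(nat \<Rightarrow> nat \<Rightarrow> complex) \<Rightarrow> complex \<Rightarrow> complex \<Rightarrow> complex" where
  "poly2 c s t = (\<Sum>(i,j)\<in>{(i,j). c i j \<noteq> 0}. c i j * s ^ i * t ^ j)"

definition ord_at :: "(complex \<Rightarrow> complex \<Rightarrow> complex) \<Rightarrow> complex \<Rightarrow> complex \<Rightarrow> nat" where
  "ord_at h a b = (LEAST m. \<exists>c. finite {(i,j). c i j \<noteq> 0}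
       \<and> (\<forall>s t. h (a + s) (b + t) = poly2 c s t)
       \<and> (\<exists>i j. i + j = m \<and> c i j \<noteq> 0))"

text \<open>Affine equation of the curve F in the standard affine chart containing p
  (first nonzero coordinate set to 1), in affine coordinates centred at p.\<close>

definition chart_eq :: "form3 \<Rightarrow> pt3 \<Rightarrow> complex \<Rightarrow> complex \<Rightarrow> complex" where
  "chart_eq F p = (case p of (p0, p1, p2) \<Rightarrow>
      if p0 \<noteq> 0 then (\<lambda>u v. F 1 (p1 / p0 + u) (p2 / p0 + v))
      else if p1 \<noteq> 0 then (\<lambda>u v. F u 1 (p2 / p1 + v))
      else (\<lambda>u v. F u v 1))"

definition mult_P2 :: "form3 \<Rightarrow> pt3 \<Rightarrow> nat" where
  "mult_P2 F p = ord_at (chart_eq F p) 0 0"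

definition general_position :: "nat \<Rightarrow> (nat \<Rightarrow> pt3) \<Rightarrow> bool" where
  "general_position r P \<longleftrightarrow>
     (\<forall>i\<in>{1..r}. P i \<noteq> (0,0,0)) \<and>
     (\<forall>i\<in>{1..r}. \<forall>j\<in>{1..r}. i \<noteq> j \<longrightarrow> \<not> proj_eq (P i) (P j)) \<and>
     (\<forall>S \<subseteq> {1..r}. card S = 3 \<longrightarrow>
        \<not> (\<exists>G. hom_poly 1 G \<and> G \<noteq> (\<lambda>x y z. 0) \<and> (\<forall>i\<in>S. eval3 G (P i) = 0))) \<and>
     (\<forall>S \<subseteq> {1..r}. card S = 6 \<longrightarrow>
        \<not> (\<exists>G. hom_poly 2 G \<and> G \<noteq> (\<lambda>x y z. 0) \<and> (\<forall>i\<in>S. eval3 G (P i) = 0))) \<and>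
     (\<forall>S \<subseteq> {1..r}. card S = 8 \<longrightarrow>
        \<not> (\<exists>G. hom_poly 3 G \<and> G \<noteq> (\<lambda>x y z. 0) \<and> (\<forall>i\<in>S. eval3 G (P i) = 0)
              \<and> (\<exists>j\<in>S. 2 \<le> mult_P2 G (P j))))"

text \<open>Points of the blow-up S_r: either a point q of P^2 distinct from all P_i, or a point
  of the exceptional curve E_i, i.e. a tangent direction (alpha,beta) at P_i, expressed in
  the affine coordinates (u,v) of the standard chart centred at P_i.\<close>
datatype bpt = Off pt3 | Exc nat "complex \<times> complex"

definition point_of_Sr :: "nat \<Rightarrow> (nat \<Rightarrow> pt3) \<Rightarrow> bpt \<Rightarrow> bool" where
  "point_of_Sr r P Q = (case Q of
      Off q \<Rightarrow> q \<noteq> (0,0,0) \<and> (\<forall>i\<in>{1..r}. \<not> proj_eq q (P i))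
    | Exc i d \<Rightarrow> i \<in> {1..r} \<and> d \<noteq> (0,0))"

definition on_exc :: "bpt \<Rightarrow> bool" where
  "on_exc Q = (case Q of Off q \<Rightarrow> False | Exc i d \<Rightarrow> True)"

definition fmap :: "(nat \<Rightarrow> pt3) \<Rightarrow> bpt \<Rightarrow> pt3" where
  "fmap P Q = (case Q of Off q \<Rightarrow> q | Exc i d \<Rightarrow> P i)"

text \<open>Multiplicity at Q of the divisor D = f^*(C_F) - k E_1 - ... - k E_r on S_r, where C_F is
  the plane curve F = 0.  Near a point of E_i we use the standard blow-up charts
  (s,t) |-> (u,v) = (s, s t) resp. (s t, t), where E_i is s = 0 resp. t = 0 and the local
  equation of f^*(C_F) is the pull-back of the affine equation; subtracting k E_i lowers
  the multiplicity by k (E_i is smooth, and no other E_j passes through Q).\<close>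
definition mult_Sr :: "nat \<Rightarrow> form3 \<Rightarrow> (nat \<Rightarrow> pt3) \<Rightarrow> bpt \<Rightarrow> int" where
  "mult_Sr k F P Q = (case Q of
      Off q \<Rightarrow> int (mult_P2 F q)
    | Exc i (\<alpha>, \<beta>) \<Rightarrow>
        (if \<alpha> \<noteq> 0 then int (ord_at (\<lambda>s t. chart_eq F (P i) s (s * t)) 0 (\<beta> / \<alpha>))
         else int (ord_at (\<lambda>s t. chart_eq F (P i) (s * t) t) 0 0)) - int k)"

definition union_of_lines_through :: "form3 \<Rightarrow> pt3 \<Rightarrow> bool" where
  "union_of_lines_through F q \<longleftrightarrow> (\<exists>c (ls :: pt3 list). c \<noteq> 0 \<and>
      (\<forall>l\<in>set ls. l \<noteq> (0,0,0) \<and> eval3 (\<lambda>x y z. fst l * x + fst (snd l) * y + snd (snd l) * z) q = 0) \<and>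
      F = (\<lambda>x y z. c * (\<Prod>l\<leftarrow>ls. fst l * x + fst (snd l) * y + snd (snd l) * z)))"

end

theory Submission imports Defs "HOL-Computational_Algebra.Fundamental_Theorem_Algebra"
begin

definition supp2 :: "(nat \<Rightarrow> nat \<Rightarrow> complex) \<Rightarrow> (nat \<times> nat) set" where
  "supp2 c = {(i,j). c i j \<noteq> 0}"

lemma finite_supp2_bound:
  assumes "finite (supp2 c)"
  obtains N where "\<And>i j. c i j \<noteq> 0 \<Longrightarrow> i < N \<and> j < N"
proof -
  obtain N1 where "\<forall>x\<in>fst ` supp2 c. x < N1"
    using assms finite_nat_bounded[of "fst ` supp2 c"] by (auto simp: lessThan_def)
  moreover obtain N2 where "\<forall>x\<in>snd ` supp2 c. x < N2"
    using assms finite_nat_bounded[of "snd ` supp2 c"] by (auto simp: lessThan_def)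
  ultimately show ?thesis
    by (intro that[of "max N1 N2"]) (force simp: supp2_def)
qed

lemma poly2_rect:
  assumes "\<And>i j. c i j \<noteq> 0 \<Longrightarrow> i < N \<and> j < N"
  shows "poly2 c s t = (\<Sum>i<N. \<Sum>j<N. c i j * s ^ i * t ^ j)"
proof -
  have "poly2 c s t = (\<Sum>(i,j)\<in>{..<N}\<times>{..<N}. c i j * s ^ i * t ^ j)"
    unfolding poly2_def
    by (rule sum.mono_neutral_left) (use assms in auto)
  also have "\<dots> = (\<Sum>i<N. \<Sum>j<N. c i j * s ^ i * t ^ j)"
    by (simp add: sum.cartesian_product)
  finally show ?thesis .
qed

lemma poly2_unique0:
  assumes "finite (supp2 c)" and "\<And>s t. poly2 c s t = 0"
  shows "c i j = 0"
proof -
  obtain N where N: "\<And>i j. c i j \<noteq> 0 \<Longrightarrow> i < N \<and> j < N"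
    using finite_supp2_bound[OF assms(1)] by blast
  have z1: "\<And>j. c N j = 0" "\<And>i. c i N = 0" using N by force+
  have A: "(\<Sum>i\<le>N. (\<Sum>j\<le>N. c i j * t ^ j) * s ^ i) = 0" for s t
  proof -
    have "(\<Sum>i\<le>N. (\<Sum>j\<le>N. c i j * t ^ j) * s ^ i) = (\<Sum>i<N. \<Sum>j<N. c i j * s ^ i * t ^ j)"
    proof -
      have "(\<Sum>i\<le>N. (\<Sum>j\<le>N. c i j * t ^ j) * s ^ i) = (\<Sum>i\<le>N. \<Sum>j\<le>N. c i j * s ^ i * t ^ j)"
        by (simp add: sum_distrib_right sum_distrib_left mult_ac)
      also have "\<dots> = (\<Sum>i<N. \<Sum>j\<le>N. c i j * s ^ i * t ^ j)"
        using z1 by (simp add: lessThan_Suc_atMost[symmetric])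
      also have "\<dots> = (\<Sum>i<N. \<Sum>j<N. c i j * s ^ i * t ^ j)"
        using z1 by (simp add: lessThan_Suc_atMost[symmetric])
      finally show ?thesis .
    qed
    then show ?thesis using assms(2)[of s t] poly2_rect[OF N] by simp
  qed
  have "\<forall>i\<le>N. (\<Sum>j\<le>N. c i j * t ^ j) = 0" for t
    using polyfun_eq_0[of "\<lambda>i. (\<Sum>j\<le>N. c i j * t ^ j)" N] A by blast
  hence B: "\<forall>t. (\<Sum>j\<le>N. c i j * t ^ j) = 0" if "i \<le> N" for i using that by blast
  show ?thesis
  proof (cases "i \<le> N \<and> j \<le> N")
    case True
    then show ?thesis using B[of i] polyfun_eq_0[of "c i" N] by blast
  next
    case False
    then show ?thesis using N[of i j] by force
  qed
qed

lemma poly2_unique: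
  assumes "finite (supp2 c)" "finite (supp2 d)" and "\<And>s t. poly2 c s t = poly2 d s t"
  shows "c = d"
proof -
  obtain N1 where N1: "\<And>i j. c i j \<noteq> 0 \<Longrightarrow> i < N1 \<and> j < N1"
    using finite_supp2_bound[OF assms(1)] by blast
  obtain N2 where N2: "\<And>i j. d i j \<noteq> 0 \<Longrightarrow> i < N2 \<and> j < N2"
    using finite_supp2_bound[OF assms(2)] by blast
  define N where "N = max N1 N2"
  have Nc: "\<And>i j. c i j \<noteq> 0 \<Longrightarrow> i < N \<and> j < N" using N1 unfolding N_def by (meson less_max_iff_disj)
  have Nd: "\<And>i j. d i j \<noteq> 0 \<Longrightarrow> i < N \<and> j < N" using N2 unfolding N_def by (meson less_max_iff_disj)
  have Ne: "\<And>i j. c i j - d i j \<noteq> 0 \<Longrightarrow> i < N \<and> j < N" using Nc Nd by (metis diff_self)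
  have fin: "finite (supp2 (\<lambda>i j. c i j - d i j))"
    by (rule finite_subset[of _ "{..<N}\<times>{..<N}"]) (use Ne in \<open>auto simp: supp2_def\<close>)
  have "poly2 (\<lambda>i j. c i j - d i j) s t = 0" for s t
  proof -
    have "poly2 (\<lambda>i j. c i j - d i j) s t = (\<Sum>i<N. \<Sum>j<N. (c i j - d i j) * s ^ i * t ^ j)"
      by (rule poly2_rect[OF Ne])
    also have "\<dots> = (\<Sum>i<N. \<Sum>j<N. c i j * s ^ i * t ^ j) - (\<Sum>i<N. \<Sum>j<N. d i j * s ^ i * t ^ j)"
      by (simp add: algebra_simps sum_subtractf)
    also have "\<dots> = poly2 c s t - poly2 d s t"
      using poly2_rect[OF Nc] poly2_rect[OF Nd] by simp
    finally show ?thesis using assms(3)[of s t] by simp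
  qed
  hence "c i j - d i j = 0" for i j using poly2_unique0[OF fin] by blast
  thus ?thesis by (auto simp: fun_eq_iff)
qed

lemma ord_le:
  assumes "finite (supp2 d)" "\<And>s t. h (a + s) (b + t) = poly2 d s t" "d i j \<noteq> 0"
  shows "ord_at h a b \<le> i + j"
  unfolding ord_at_def
  by (rule Least_le) (use assms in \<open>auto simp: supp2_def\<close>)

lemma ord_eq:
  assumes "finite (supp2 c)" "\<And>s t. h (a + s) (b + t) = poly2 c s t" "c i0 j0 \<noteq> 0"
  shows "\<exists>i j. c i j \<noteq> 0 \<and> i + j = ord_at h a b"
    and "\<And>i j. c i j \<noteq> 0 \<Longrightarrow> ord_at h a b \<le> i + j"
proof -
  let ?P = "\<lambda>m. \<exists>c. finite {(i,j). c i j \<noteq> 0}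
       \<and> (\<forall>s t. h (a + s) (b + t) = poly2 c s t)
       \<and> (\<exists>i j. i + j = m \<and> c i j \<noteq> 0)"
  have "?P (i0 + j0)" using assms by (auto simp: supp2_def)
  hence "?P (ord_at h a b)" unfolding ord_at_def by (rule LeastI)
  then obtain c' where c': "finite (supp2 c')" "\<And>s t. h (a + s) (b + t) = poly2 c' s t"
    "\<exists>i j. i + j = ord_at h a b \<and> c' i j \<noteq> 0" by (auto simp: supp2_def)
  have "c' = c" by (rule poly2_unique[OF c'(1) assms(1)]) (metis c'(2) assms(2))
  with c'(3) show "\<exists>i j. c i j \<noteq> 0 \<and> i + j = ord_at h a b" by blast
  show "\<And>i j. c i j \<noteq> 0 \<Longrightarrow> ord_at h a b \<le> i + j" by (rule ord_le[OF assms(1,2)])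
qed

lemma shift_t:
  fixes c :: "nat \<Rightarrow> nat \<Rightarrow> complex" and b s t :: complex
  assumes N: "\<And>i j. c i j \<noteq> 0 \<Longrightarrow> i < N \<and> j < N"
  defines "d \<equiv> (\<lambda>a l. \<Sum>j<N. c a j * of_nat (j choose l) * b ^ (j - l))"
  shows "\<And>a l. d a l \<noteq> 0 \<Longrightarrow> a < N \<and> l < N \<and> (\<exists>j\<ge>l. c a j \<noteq> 0)"
    and "poly2 c s (b + t) = poly2 d s t"
proof -
  fix a l assume "d a l \<noteq> 0"
  then obtain j where j0: "j \<in> {..<N}" "c a j * of_nat (j choose l) * b ^ (j - l) \<noteq> 0"
    unfolding d_def by (rule sum.not_neutral_contains_not_neutral)
  hence j: "j < N" "c a j * of_nat (j choose l) * b ^ (j - l) \<noteq> 0" by auto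
  hence "l \<le> j" "c a j \<noteq> 0" by (auto simp: binomial_eq_0_iff)
  thus "a < N \<and> l < N \<and> (\<exists>j\<ge>l. c a j \<noteq> 0)" using N[of a j] j by auto
next
  have Nd: "\<And>a l. d a l \<noteq> 0 \<Longrightarrow> a < N \<and> l < N"
  proof -
    fix a l assume "d a l \<noteq> 0"
    then obtain j where j0: "j \<in> {..<N}" "c a j * of_nat (j choose l) * b ^ (j - l) \<noteq> 0"
      unfolding d_def by (rule sum.not_neutral_contains_not_neutral)
    hence j: "j < N" "c a j * of_nat (j choose l) * b ^ (j - l) \<noteq> 0" by auto
    hence "l \<le> j" "c a j \<noteq> 0" by (auto simp: binomial_eq_0_iff)
    thus "a < N \<and> l < N" using N[of a j] j by auto
  qed
  have binom: "(b + t) ^ j = (\<Sum>l<N. of_nat (j choose l) * b ^ (j - l) * t ^ l)" if "j < N" for j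
  proof -
    have "(b + t) ^ j = (t + b) ^ j" by (simp add: add.commute)
    also have "\<dots> = (\<Sum>l\<le>j. of_nat (j choose l) * t ^ l * b ^ (j - l))" by (rule binomial_ring)
    also have "\<dots> = (\<Sum>l<N. of_nat (j choose l) * t ^ l * b ^ (j - l))"
      by (rule sum.mono_neutral_left) (use that in \<open>auto simp: binomial_eq_0_iff\<close>)
    finally show ?thesis by (simp add: mult_ac)
  qed
  have "poly2 d s t = (\<Sum>a<N. \<Sum>l<N. d a l * s ^ a * t ^ l)"
    by (rule poly2_rect[OF Nd])
  also have "\<dots> = (\<Sum>a<N. \<Sum>l<N. \<Sum>j<N. c a j * of_nat (j choose l) * b ^ (j - l) * s ^ a * t ^ l)"
    by (simp add: d_def sum_distrib_right)
  also have "\<dots> = (\<Sum>a<N. \<Sum>j<N. \<Sum>l<N. c a j * s ^ a * (of_nat (j choose l) * b ^ (j - l) * t ^ l))"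
    apply (rule sum.cong[OF refl])
    apply (rule trans[OF sum.swap])
    apply (intro sum.cong refl)
    apply (simp add: mult_ac)
    done
  also have "\<dots> = (\<Sum>a<N. \<Sum>j<N. c a j * s ^ a * (b + t) ^ j)"
    by (rule sum.cong[OF refl])+ (auto simp: binom sum_distrib_left)
  also have "\<dots> = poly2 c s (b + t)" by (rule poly2_rect[OF N, symmetric])
  finally show "poly2 c s (b + t) = poly2 d s t" by simp
qed

lemma poly2_swap: "poly2 (\<lambda>i j. c j i) s t = poly2 c t s"
proof -
  have "poly2 (\<lambda>i j. c j i) s t = (\<Sum>(i,j)\<in>(\<lambda>(x,y). (y,x)) ` {(i,j). c i j \<noteq> 0}. c j i * s ^ i * t ^ j)"
    unfolding poly2_def by (intro sum.cong refl) auto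
  also have "\<dots> = (\<Sum>(i,j)\<in>{(i,j). c i j \<noteq> 0}. c i j * t ^ i * s ^ j)"
    by (subst sum.reindex) (auto simp: inj_on_def intro!: sum.cong simp: mult.commute mult.left_commute)
  finally show ?thesis unfolding poly2_def .
qed


definition polyrep :: "nat \<Rightarrow> (complex \<Rightarrow> complex \<Rightarrow> complex) \<Rightarrow> bool" where
  "polyrep n h \<longleftrightarrow> (\<exists>e. finite (supp2 e) \<and> (\<forall>i j. e i j \<noteq> 0 \<longrightarrow> i + j \<le> n)
      \<and> (\<forall>s t. h s t = poly2 e s t))"

lemma polyrep_swap:
  assumes "polyrep n h" shows "polyrep n (\<lambda>s t. h t s)"
proof -
  obtain e where e: "finite (supp2 e)" "\<forall>i j. e i j \<noteq> 0 \<longrightarrow> i + j \<le> n" "\<forall>s t. h s t = poly2 e s t"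
    using assms unfolding polyrep_def by blast
  have "supp2 (\<lambda>i j. e j i) = (\<lambda>(x,y). (y,x)) ` supp2 e" unfolding supp2_def by force
  hence "finite (supp2 (\<lambda>i j. e j i))" using e(1) by simp
  moreover have "\<forall>i j. e j i \<noteq> 0 \<longrightarrow> i + j \<le> n"
  proof (intro allI impI)
    fix i j assume "e j i \<noteq> 0"
    hence "j + i \<le> n" using e(2) by blast
    thus "i + j \<le> n" by simp
  qed
  moreover have "\<forall>s t. h t s = poly2 (\<lambda>i j. e j i) s t" using e(3) poly2_swap[of e] by simp
  ultimately show ?thesis unfolding polyrep_def by blast
qed

lemma polyrep_shift_t:
  assumes "polyrep n h" shows "polyrep n (\<lambda>s t. h s (b + t))"
proof -
  obtain e where e: "finite (supp2 e)" "\<forall>i j. e i j \<noteq> 0 \<longrightarrow> i + j \<le> n" "\<forall>s t. h s t = poly2 e s t"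
    using assms unfolding polyrep_def by blast
  obtain N where N: "\<And>i j. e i j \<noteq> 0 \<Longrightarrow> i < N \<and> j < N"
    using finite_supp2_bound[OF e(1)] by blast
  define d where "d = (\<lambda>a l. \<Sum>j<N. e a j * of_nat (j choose l) * b ^ (j - l))"
  have sh1: "\<And>a l. d a l \<noteq> 0 \<Longrightarrow> a < N \<and> l < N \<and> (\<exists>j\<ge>l. e a j \<noteq> 0)"
    unfolding d_def by (rule shift_t(1)[where b=b and c=e and N=N, OF N])
  have sh2: "\<And>s t. poly2 e s (b + t) = poly2 d s t"
    unfolding d_def by (rule shift_t(2)[where b=b and c=e and N=N, OF N])
  have "finite (supp2 d)"
  proof (rule finite_subset[of _ "{..<N}\<times>{..<N}"])
    show "supp2 d \<subseteq> {..<N} \<times> {..<N}"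
    proof
      fix p assume "p \<in> supp2 d"
      then obtain i j where "p = (i,j)" "d i j \<noteq> 0" by (auto simp: supp2_def)
      with sh1[of i j] show "p \<in> {..<N} \<times> {..<N}" by simp
    qed
  qed simp
  moreover have "\<forall>i j. d i j \<noteq> 0 \<longrightarrow> i + j \<le> n"
  proof (intro allI impI)
    fix i j assume "d i j \<noteq> 0"
    then obtain j' where j': "j' \<ge> j" "e i j' \<noteq> 0" using sh1[of i j] by blast
    have "i + j' \<le> n" using e(2) j'(2) by blast
    thus "i + j \<le> n" using j'(1) by linarith
  qed
  moreover have "\<forall>s t. h s (b + t) = poly2 d s t"
  proof (intro allI)
    fix s t show "h s (b + t) = poly2 d s t" using e(3) sh2[of s t] by simp
  qed
  ultimately show ?thesis unfolding polyrep_def by blast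
qed

lemma polyrep_shift_s:
  assumes "polyrep n h" shows "polyrep n (\<lambda>s t. h (a + s) t)"
  using polyrep_swap[OF polyrep_shift_t[OF polyrep_swap[OF assms], of a]] by simp

lemma polyrep_shift:
  assumes "polyrep n h" shows "polyrep n (\<lambda>s t. h (a + s) (b + t))"
  using polyrep_shift_t[OF polyrep_shift_s[OF assms, of a], of b] by simp

lemma poly2_superset:
  assumes "finite A" "supp2 c \<subseteq> A"
  shows "poly2 c s t = (\<Sum>(i,j)\<in>A. c i j * s ^ i * t ^ j)"
  unfolding poly2_def
  by (rule sum.mono_neutral_left) (use assms in \<open>auto simp: supp2_def\<close>)

definition Tn :: "nat \<Rightarrow> (nat \<times> nat) set" where
  "Tn n = {(i,j). i + j \<le> n}"

lemma finite_Tn: "finite (Tn n)"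
  by (rule finite_subset[of _ "{..n}\<times>{..n}"]) (auto simp: Tn_def)

lemma hom_polyE:
  assumes "hom_poly n F"
  obtains C where "F = (\<lambda>x y z. \<Sum>(i,j)\<in>Tn n. C i j * x ^ i * y ^ j * z ^ (n - i - j))"
  using assms unfolding hom_poly_def Tn_def by blast

lemma hom_scale:
  assumes "hom_poly n F"
  shows "F (l * x) (l * y) (l * z) = l ^ n * F x y z"
proof -
  obtain C where C: "F = (\<lambda>x y z. \<Sum>(i,j)\<in>Tn n. C i j * x ^ i * y ^ j * z ^ (n - i - j))"
    using hom_polyE[OF assms] by blast
  have "F (l * x) (l * y) (l * z) = (\<Sum>(i,j)\<in>Tn n. l ^ n * (C i j * x ^ i * y ^ j * z ^ (n - i - j)))"
    unfolding C
  proof (intro sum.cong refl, clarify)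
    fix i j assume "(i,j) \<in> Tn n"
    hence "n = i + j + (n - i - j)" by (auto simp: Tn_def)
    hence "l ^ n = l ^ i * l ^ j * l ^ (n - i - j)" by (metis power_add)
    thus "C i j * (l * x) ^ i * (l * y) ^ j * (l * z) ^ (n - i - j) = l ^ n * (C i j * x ^ i * y ^ j * z ^ (n - i - j))"
      by (simp add: power_mult_distrib mult_ac)
  qed
  also have "\<dots> = l ^ n * F x y z" unfolding C by (simp add: sum_distrib_left case_prod_unfold)
  finally show ?thesis .
qed

lemma F_zero_if_C_zero:
  fixes F :: form3
  assumes "F = (\<lambda>x y z. \<Sum>(i,j)\<in>Tn n. C i j * x ^ i * y ^ j * z ^ (n - i - j))"
    and "\<And>i j. (i,j) \<in> Tn n \<Longrightarrow> C i j = 0"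
  shows "F = (\<lambda>x y z. 0)"
proof -
  have "F x y z = 0" for x y z
    unfolding assms(1) by (rule sum.neutral) (use assms(2) in auto)
  thus ?thesis by (auto simp: fun_eq_iff)
qed

lemma chart3:
  assumes "hom_poly n F"
  shows "polyrep n (\<lambda>u v. F u v 1)" and "F \<noteq> (\<lambda>x y z. 0) \<Longrightarrow> \<exists>u v. F u v 1 \<noteq> 0"
proof -
  obtain C where C: "F = (\<lambda>x y z. \<Sum>(i,j)\<in>Tn n. C i j * x ^ i * y ^ j * z ^ (n - i - j))"
    using hom_polyE[OF assms] by blast
  define e where "e = (\<lambda>i j. if i + j \<le> n then C i j else 0)"
  have se: "supp2 e \<subseteq> Tn n" by (auto simp: supp2_def e_def Tn_def split: if_splits)
  have fin: "finite (supp2 e)" using se finite_Tn finite_subset by blast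
  have eq: "F u v 1 = poly2 e u v" for u v
    unfolding poly2_superset[OF finite_Tn se] C
    by (intro sum.cong refl) (auto simp: e_def Tn_def)
  show "polyrep n (\<lambda>u v. F u v 1)" unfolding polyrep_def
    using fin eq by (intro exI[of _ e]) (auto simp: e_def split: if_splits)
  assume F0: "F \<noteq> (\<lambda>x y z. 0)"
  show "\<exists>u v. F u v 1 \<noteq> 0"
  proof (rule ccontr)
    assume "\<not> ?thesis"
    hence "\<And>i j. e i j = 0" using poly2_unique0[OF fin] eq by metis
    hence "\<And>i j. (i,j) \<in> Tn n \<Longrightarrow> C i j = 0" unfolding e_def Tn_def by (metis case_prodD mem_Collect_eq)
    with F0 C show False using F_zero_if_C_zero by blast
  qed
qed


lemma chart1:
  assumes "hom_poly n F"
  shows "polyrep n (\<lambda>y z. F 1 y z)" and "F \<noteq> (\<lambda>x y z. 0) \<Longrightarrow> \<exists>y z. F 1 y z \<noteq> 0"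
proof -
  obtain C where C: "F = (\<lambda>x y z. \<Sum>(i,j)\<in>Tn n. C i j * x ^ i * y ^ j * z ^ (n - i - j))"
    using hom_polyE[OF assms] by blast
  define e where "e = (\<lambda>a b. if a + b \<le> n then C (n - a - b) a else 0)"
  have se: "supp2 e \<subseteq> Tn n" by (auto simp: supp2_def e_def Tn_def split: if_splits)
  have fin: "finite (supp2 e)" using se finite_Tn finite_subset by blast
  have eq: "F 1 y z = poly2 e y z" for y z
  proof -
    have "F 1 y z = (\<Sum>(i,j)\<in>Tn n. C i j * y ^ j * z ^ (n - i - j))" unfolding C by simp
    also have "\<dots> = (\<Sum>(a,b)\<in>Tn n. e a b * y ^ a * z ^ b)"
      by (rule sum.reindex_bij_witness[where j = "\<lambda>(i,j). (j, n - i - j)" and i = "\<lambda>(a,b). (n - a - b, a)"])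
         (auto simp: Tn_def e_def)
    also have "\<dots> = poly2 e y z" by (rule poly2_superset[OF finite_Tn se, symmetric])
    finally show ?thesis .
  qed
  show "polyrep n (\<lambda>y z. F 1 y z)" unfolding polyrep_def
    using fin eq by (intro exI[of _ e]) (auto simp: e_def split: if_splits)
  assume F0: "F \<noteq> (\<lambda>x y z. 0)"
  show "\<exists>y z. F 1 y z \<noteq> 0"
  proof (rule ccontr)
    assume "\<not> ?thesis"
    hence e0: "\<And>i j. e i j = 0" using poly2_unique0[OF fin] eq by metis
    have "\<And>i j. (i,j) \<in> Tn n \<Longrightarrow> C i j = 0"
    proof -
      fix i j assume "(i,j) \<in> Tn n"
      hence "e j (n - i - j) = C i j" by (auto simp: e_def Tn_def)
      thus "C i j = 0" using e0 by simp
    qed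
    with F0 C show False using F_zero_if_C_zero by blast
  qed
qed

lemma chart2:
  assumes "hom_poly n F"
  shows "polyrep n (\<lambda>x z. F x 1 z)" and "F \<noteq> (\<lambda>x y z. 0) \<Longrightarrow> \<exists>x z. F x 1 z \<noteq> 0"
proof -
  obtain C where C: "F = (\<lambda>x y z. \<Sum>(i,j)\<in>Tn n. C i j * x ^ i * y ^ j * z ^ (n - i - j))"
    using hom_polyE[OF assms] by blast
  define e where "e = (\<lambda>a b. if a + b \<le> n then C a (n - a - b) else 0)"
  have se: "supp2 e \<subseteq> Tn n" by (auto simp: supp2_def e_def Tn_def split: if_splits)
  have fin: "finite (supp2 e)" using se finite_Tn finite_subset by blast
  have eq: "F x 1 z = poly2 e x z" for x z
  proof -
    have "F x 1 z = (\<Sum>(i,j)\<in>Tn n. C i j * x ^ i * z ^ (n - i - j))" unfolding C by simp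
    also have "\<dots> = (\<Sum>(a,b)\<in>Tn n. e a b * x ^ a * z ^ b)"
      by (rule sum.reindex_bij_witness[where j = "\<lambda>(i,j). (i, n - i - j)" and i = "\<lambda>(a,b). (a, n - a - b)"])
         (auto simp: Tn_def e_def)
    also have "\<dots> = poly2 e x z" by (rule poly2_superset[OF finite_Tn se, symmetric])
    finally show ?thesis .
  qed
  show "polyrep n (\<lambda>x z. F x 1 z)" unfolding polyrep_def
    using fin eq by (intro exI[of _ e]) (auto simp: e_def split: if_splits)
  assume F0: "F \<noteq> (\<lambda>x y z. 0)"
  show "\<exists>x z. F x 1 z \<noteq> 0"
  proof (rule ccontr)
    assume "\<not> ?thesis"
    hence e0: "\<And>i j. e i j = 0" using poly2_unique0[OF fin] eq by metis
    have "\<And>i j. (i,j) \<in> Tn n \<Longrightarrow> C i j = 0"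
    proof -
      fix i j assume "(i,j) \<in> Tn n"
      hence "e i (n - i - j) = C i j" by (auto simp: e_def Tn_def)
      thus "C i j = 0" using e0 by simp
    qed
    with F0 C show False using F_zero_if_C_zero by blast
  qed
qed

lemma chart_rep:
  assumes "hom_poly n F"
  shows "polyrep n (chart_eq F q)" and "F \<noteq> (\<lambda>x y z. 0) \<Longrightarrow> \<exists>u v. chart_eq F q u v \<noteq> 0"
proof -
  obtain p0 p1 p2 where q: "q = (p0, p1, p2)" by (cases q) auto
  show "polyrep n (chart_eq F q)"
  proof (cases "p0 \<noteq> 0")
    case True
    then show ?thesis using polyrep_shift[OF chart1(1)[OF assms], of "p1/p0" "p2/p0"]
      by (simp add: q chart_eq_def)
  next
    case False
    show ?thesis
    proof (cases "p1 \<noteq> 0")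
      case True
      then show ?thesis using False polyrep_shift_t[OF chart2(1)[OF assms], of "p2/p1"]
        by (simp add: q chart_eq_def)
    next
      case False2: False
      then show ?thesis using False chart3(1)[OF assms]
        by (simp add: q chart_eq_def)
    qed
  qed
  assume F0: "F \<noteq> (\<lambda>x y z. 0)"
  show "\<exists>u v. chart_eq F q u v \<noteq> 0"
  proof (cases "p0 \<noteq> 0")
    case True
    obtain y z where "F 1 y z \<noteq> 0" using chart1(2)[OF assms F0] by blast
    hence "chart_eq F q (y - p1/p0) (z - p2/p0) \<noteq> 0" using True by (simp add: q chart_eq_def)
    then show ?thesis by blast
  next
    case False
    show ?thesis
    proof (cases "p1 \<noteq> 0")
      case True
      obtain x z where "F x 1 z \<noteq> 0" using chart2(2)[OF assms F0] by blast
      hence "chart_eq F q x (z - p2/p1) \<noteq> 0" using True False by (simp add: q chart_eq_def)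
      then show ?thesis by blast
    next
      case False2: False
      obtain x y where "F x y 1 \<noteq> 0" using chart3(2)[OF assms F0] by blast
      hence "chart_eq F q x y \<noteq> 0" using False2 False by (simp add: q chart_eq_def)
      then show ?thesis by blast
    qed
  qed
qed


lemma ext0:
  fixes f g :: "complex \<Rightarrow> complex"
  assumes "isCont f 0" "isCont g 0" "\<And>x. x \<noteq> 0 \<Longrightarrow> f x = g x"
  shows "f 0 = g 0"
proof -
  have f: "f \<midarrow>0\<rightarrow> f 0" using assms(1) isCont_def by blast
  have g: "g \<midarrow>0\<rightarrow> g 0" using assms(2) isCont_def by blast
  have "f \<midarrow>0\<rightarrow> g 0" using LIM_cong[of 0 0 f g "g 0" "g 0"] assms(3) g by blast
  with f show ?thesis by (rule LIM_unique)
qed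

lemma prod_list_upt: "prod_list (map f [0..<d]) = (\<Prod>i<d. f i)"
  by (induction d) (auto simp: lessThan_Suc mult.commute)

lemma binary_form_factor:
  fixes h :: "nat \<Rightarrow> complex"
  assumes "i0 \<le> n" "h i0 \<noteq> 0"
  shows "\<exists>c ps. c \<noteq> 0 \<and> (\<forall>p\<in>set ps. p \<noteq> (0,0)) \<and>
    (\<forall>U V. (\<Sum>i\<le>n. h i * U ^ i * V ^ (n - i)) = c * prod_list (map (\<lambda>(\<alpha>,\<beta>). \<alpha> * U + \<beta> * V) ps))"
proof -
  define p where "p = (\<Sum>i\<le>n. monom (h i) i)"
  have cp: "coeff p i = (if i \<le> n then h i else 0)" for i
    unfolding p_def by (simp add: coeff_sum coeff_monom)
  have pp: "poly p X = (\<Sum>i\<le>n. h i * X ^ i)" for X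
    unfolding p_def by (simp add: poly_sum poly_monom)
  have p0: "p \<noteq> 0" using cp[of i0] assms by auto
  define d where "d = degree p"
  have dn: "d \<le> n"
    unfolding d_def by (rule degree_le) (simp add: cp)
  obtain root where root: "smult (lead_coeff p) (\<Prod>i<degree p. [:-root i, 1:]) = p"
    using complex_poly_decompose' by blast
  define c where "c = lead_coeff p"
  have c0: "c \<noteq> 0" using p0 by (simp add: c_def)
  have pr: "poly p X = c * (\<Prod>i<d. X - root i)" for X
    using arg_cong[OF root, of "\<lambda>q. poly q X"] by (simp add: poly_prod c_def d_def)
  define ps where "ps = map (\<lambda>i. (1::complex, - root i)) [0..<d] @ replicate (n - d) (0, 1)"
  have "\<forall>p\<in>set ps. p \<noteq> (0,0)" by (auto simp: ps_def)
  moreover have "(\<Sum>i\<le>n. h i * U ^ i * V ^ (n - i)) = c * prod_list (map (\<lambda>(\<alpha>,\<beta>). \<alpha> * U + \<beta> * V) ps)" for U V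
  proof -
    have R: "prod_list (map (\<lambda>(\<alpha>,\<beta>). \<alpha> * U + \<beta> * V) ps) = (\<Prod>i<d. U - root i * V) * V ^ (n - d)"
      by (simp add: ps_def o_def prod_list_upt)
    show ?thesis
    proof (cases "V = 0")
      case False
      have "(\<Sum>i\<le>n. h i * U ^ i * V ^ (n - i)) = V ^ n * (\<Sum>i\<le>n. h i * (U / V) ^ i)"
        unfolding sum_distrib_left
      proof (rule sum.cong[OF refl])
        fix i assume "i \<in> {..n}"
        hence "V ^ n = V ^ i * V ^ (n - i)" by (simp add: power_add[symmetric])
        thus "h i * U ^ i * V ^ (n - i) = V ^ n * (h i * (U / V) ^ i)"
          using False by (simp add: power_divide field_simps)
      qed
      also have "\<dots> = V ^ n * (c * (\<Prod>i<d. U / V - root i))" using pr pp by metis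
      also have "\<dots> = c * (V ^ d * (\<Prod>i<d. U / V - root i)) * V ^ (n - d)"
        using dn by (simp add: power_add[symmetric] mult_ac)
      also have "V ^ d * (\<Prod>i<d. U / V - root i) = (\<Prod>i<d. U - root i * V)"
      proof -
        have "(\<Prod>i<d. U / V - root i) = (\<Prod>i<d. (U - root i * V) / V)"
          using False by (intro prod.cong) (auto simp: field_simps)
        also have "\<dots> = (\<Prod>i<d. U - root i * V) / V ^ d" by (simp add: prod_dividef)
        finally show ?thesis using False by simp
      qed
      finally show ?thesis using R by (simp add: mult_ac)
    next
      case True
      have L: "(\<Sum>i\<le>n. h i * U ^ i * V ^ (n - i)) = h n * U ^ n"
        using True by (subst sum.remove[of _ n]) (auto intro!: sum.neutral)
      show ?thesis
      proof (cases "d = n")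
        case True
        have "h n = c" using cp[of n] True by (simp add: c_def d_def)
        then show ?thesis using L R \<open>V = 0\<close> True by simp
      next
        case False
        hence "h n = 0" using cp[of n] dn coeff_eq_0[of p n] by (simp add: d_def)
        then show ?thesis using L R \<open>V = 0\<close> False dn by simp
      qed
    qed
  qed
  ultimately show ?thesis using c0 by blast
qed


definition linf :: "pt3 \<Rightarrow> complex \<Rightarrow> complex \<Rightarrow> complex \<Rightarrow> complex" where
  "linf l x y z = fst l * x + fst (snd l) * y + snd (snd l) * z"

definition comb :: "pt3 \<Rightarrow> pt3 \<Rightarrow> complex \<times> complex \<Rightarrow> pt3" where
  "comb L1 L2 ab = (case ab of (\<alpha>, \<beta>) \<Rightarrow>
     (\<alpha> * fst L1 + \<beta> * fst L2, \<alpha> * fst (snd L1) + \<beta> * fst (snd L2), \<alpha> * snd (snd L1) + \<beta> * snd (snd L2)))"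

lemma linf_comb: "linf (comb L1 L2 (\<alpha>, \<beta>)) x y z = \<alpha> * linf L1 x y z + \<beta> * linf L2 x y z"
  by (simp add: linf_def comb_def algebra_simps)

lemma lines_from_form:
  fixes F :: form3 and h :: "nat \<Rightarrow> complex"
  assumes "i0 \<le> n" "h i0 \<noteq> 0"
   and FH: "\<And>x y z. F x y z = (\<Sum>i\<le>n. h i * linf L1 x y z ^ i * linf L2 x y z ^ (n - i))"
   and q1: "linf L1 q0 q1 q2 = 0" and q2: "linf L2 q0 q1 q2 = 0"
   and ind: "\<And>\<alpha> \<beta>. (\<alpha>, \<beta>) \<noteq> (0,0) \<Longrightarrow> comb L1 L2 (\<alpha>, \<beta>) \<noteq> (0,0,0)"
  shows "union_of_lines_through F (q0, q1, q2)"
proof -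
  obtain c ps where c: "c \<noteq> 0" and ps: "\<forall>p\<in>set ps. p \<noteq> (0,0)"
    and fac: "\<And>U V. (\<Sum>i\<le>n. h i * U ^ i * V ^ (n - i)) = c * prod_list (map (\<lambda>(\<alpha>,\<beta>). \<alpha> * U + \<beta> * V) ps)"
    using binary_form_factor[where h=h and ?i0.0=i0 and n=n, OF assms(1,2)] by blast
  define ls where "ls = map (comb L1 L2) ps"
  have "\<forall>l\<in>set ls. l \<noteq> (0,0,0) \<and> eval3 (\<lambda>x y z. fst l * x + fst (snd l) * y + snd (snd l) * z) (q0, q1, q2) = 0"
  proof
    fix l assume "l \<in> set ls"
    then obtain \<alpha> \<beta> where ab: "(\<alpha>, \<beta>) \<in> set ps" "l = comb L1 L2 (\<alpha>, \<beta>)" by (auto simp: ls_def)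
    have "(\<alpha>, \<beta>) \<noteq> (0,0)" using ps ab(1) by blast
    hence "l \<noteq> (0,0,0)" using ind[of \<alpha> \<beta>] ab(2) by simp
    moreover have "linf l q0 q1 q2 = 0" using ab(2) linf_comb q1 q2 by simp
    ultimately show "l \<noteq> (0,0,0) \<and> eval3 (\<lambda>x y z. fst l * x + fst (snd l) * y + snd (snd l) * z) (q0, q1, q2) = 0"
      by (simp add: eval3_def linf_def)
  qed
  moreover have "F = (\<lambda>x y z. c * (\<Prod>l\<leftarrow>ls. fst l * x + fst (snd l) * y + snd (snd l) * z))"
  proof (intro ext)
    fix x y z
    have "F x y z = c * prod_list (map (\<lambda>(\<alpha>,\<beta>). \<alpha> * linf L1 x y z + \<beta> * linf L2 x y z) ps)"
      using FH fac by simp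
    also have "map (\<lambda>(\<alpha>,\<beta>). \<alpha> * linf L1 x y z + \<beta> * linf L2 x y z) ps
        = map (\<lambda>l. fst l * x + fst (snd l) * y + snd (snd l) * z) ls"
      unfolding ls_def map_map
      by (intro map_cong refl) (auto simp: comb_def linf_def algebra_simps)
    finally show "F x y z = c * (\<Prod>l\<leftarrow>ls. fst l * x + fst (snd l) * y + snd (snd l) * z)" .
  qed
  ultimately show ?thesis unfolding union_of_lines_through_def using c by blast
qed


lemma poly2_supp: "poly2 c s t = (\<Sum>(i,j)\<in>supp2 c. c i j * s ^ i * t ^ j)"
  unfolding poly2_def supp2_def ..

lemma mult_rep:
  assumes "hom_poly n F" "F \<noteq> (\<lambda>x y z. 0)"
  obtains e where "finite (supp2 e)" "\<forall>i j. e i j \<noteq> 0 \<longrightarrow> i + j \<le> n"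
    "\<forall>s t. chart_eq F q s t = poly2 e s t"
    "\<exists>i j. e i j \<noteq> 0 \<and> i + j = mult_P2 F q" "\<forall>i j. e i j \<noteq> 0 \<longrightarrow> mult_P2 F q \<le> i + j"
proof -
  obtain e where e: "finite (supp2 e)" "\<forall>i j. e i j \<noteq> 0 \<longrightarrow> i + j \<le> n"
    "\<forall>s t. chart_eq F q s t = poly2 e s t"
    using chart_rep(1)[OF assms(1), of q] unfolding polyrep_def by blast
  obtain u v where "chart_eq F q u v \<noteq> 0" using chart_rep(2)[OF assms] by blast
  hence "poly2 e u v \<noteq> 0" using e(3) by simp
  then obtain i0 j0 where ij: "e i0 j0 \<noteq> 0"
    unfolding poly2_def by (metis (mono_tags, lifting) empty_Collect_eq sum.empty case_prodE)
  have h: "\<And>s t. chart_eq F q (0 + s) (0 + t) = poly2 e s t" using e(3) by simp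
  note oe = ord_eq[OF e(1) h ij]
  show ?thesis
    by (rule that[OF e]) (use oe in \<open>auto simp: mult_P2_def\<close>)
qed

lemma subst_st:
  assumes "finite (supp2 e)"
  defines "c1 \<equiv> (\<lambda>a b. if b \<le> a then e (a - b) b else 0)"
  shows "finite (supp2 c1)" and "poly2 e s (s * w) = poly2 c1 s w"
proof -
  have S: "supp2 c1 = (\<lambda>(i,j). (i + j, j)) ` supp2 e"
  proof
    show "supp2 c1 \<subseteq> (\<lambda>(i,j). (i + j, j)) ` supp2 e"
    proof
      fix p assume "p \<in> supp2 c1"
      then obtain a b where p: "p = (a,b)" "b \<le> a" "e (a - b) b \<noteq> 0"
        by (auto simp: supp2_def c1_def split: if_splits)
      hence "(a - b, b) \<in> supp2 e" by (simp add: supp2_def)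
      moreover have "p = (\<lambda>(i,j). (i + j, j)) (a - b, b)" using p by simp
      ultimately show "p \<in> (\<lambda>(i,j). (i + j, j)) ` supp2 e" by blast
    qed
    show "(\<lambda>(i,j). (i + j, j)) ` supp2 e \<subseteq> supp2 c1"
      by (auto simp: supp2_def c1_def)
  qed
  show "finite (supp2 c1)" unfolding S using assms(1) by simp
  have inj: "inj_on (\<lambda>(i,j). (i + j, j)) (supp2 e)" by (auto simp: inj_on_def)
  have "poly2 c1 s w = (\<Sum>(i,j)\<in>supp2 e. c1 (i + j) j * s ^ (i + j) * w ^ j)"
    unfolding poly2_supp S by (subst sum.reindex[OF inj]) (simp add: case_prod_unfold)
  also have "\<dots> = (\<Sum>(i,j)\<in>supp2 e. e i j * s ^ i * (s * w) ^ j)"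
    by (intro sum.cong refl) (auto simp: c1_def power_add power_mult_distrib)
  also have "\<dots> = poly2 e s (s * w)" unfolding poly2_supp ..
  finally show "poly2 e s (s * w) = poly2 c1 s w" by simp
qed

lemma subst_ts:
  assumes "finite (supp2 e)"
  defines "c2 \<equiv> (\<lambda>a b. if a \<le> b then e a (b - a) else 0)"
  shows "finite (supp2 c2)" and "poly2 e (s * t) t = poly2 c2 s t"
proof -
  have S: "supp2 c2 = (\<lambda>(i,j). (i, i + j)) ` supp2 e"
  proof
    show "supp2 c2 \<subseteq> (\<lambda>(i,j). (i, i + j)) ` supp2 e"
    proof
      fix p assume "p \<in> supp2 c2"
      then obtain a b where p: "p = (a,b)" "a \<le> b" "e a (b - a) \<noteq> 0"
        by (auto simp: supp2_def c2_def split: if_splits)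
      hence "(a, b - a) \<in> supp2 e" by (simp add: supp2_def)
      moreover have "p = (\<lambda>(i,j). (i, i + j)) (a, b - a)" using p by simp
      ultimately show "p \<in> (\<lambda>(i,j). (i, i + j)) ` supp2 e" by blast
    qed
    show "(\<lambda>(i,j). (i, i + j)) ` supp2 e \<subseteq> supp2 c2"
      by (auto simp: supp2_def c2_def)
  qed
  show "finite (supp2 c2)" unfolding S using assms(1) by simp
  have inj: "inj_on (\<lambda>(i,j). (i, i + j)) (supp2 e)" by (auto simp: inj_on_def)
  have "poly2 c2 s t = (\<Sum>(i,j)\<in>supp2 e. c2 i (i + j) * s ^ i * t ^ (i + j))"
    unfolding poly2_supp S by (subst sum.reindex[OF inj]) (simp add: case_prod_unfold)
  also have "\<dots> = (\<Sum>(i,j)\<in>supp2 e. e i j * (s * t) ^ i * t ^ j)"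
    by (intro sum.cong refl) (auto simp: c2_def power_add power_mult_distrib)
  also have "\<dots> = poly2 e (s * t) t" unfolding poly2_supp ..
  finally show "poly2 e (s * t) t = poly2 c2 s t" by simp
qed


lemma exc_bound1:
  assumes "hom_poly n F" "F \<noteq> (\<lambda>x y z. 0)"
  shows "ord_at (\<lambda>s t. chart_eq F p s (s * t)) 0 b \<le> 2 * mult_P2 F p"
proof -
  define m where "m = mult_P2 F p"
  obtain e where e: "finite (supp2 e)" "\<forall>s t. chart_eq F p s t = poly2 e s t"
    "\<exists>i j. e i j \<noteq> 0 \<and> i + j = m" "\<forall>i j. e i j \<noteq> 0 \<longrightarrow> m \<le> i + j"
    using mult_rep[OF assms, of p] unfolding m_def by metis
  obtain i0 j0 where ij: "e i0 j0 \<noteq> 0" "i0 + j0 = m" using e(3) by blast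
  define c1 where "c1 = (\<lambda>a b. if b \<le> a then e (a - b) b else 0)"
  have fc1: "finite (supp2 c1)" and sc1: "\<And>s w. poly2 e s (s * w) = poly2 c1 s w"
    using subst_st[OF e(1)] unfolding c1_def by blast+
  obtain N where N: "\<And>i j. c1 i j \<noteq> 0 \<Longrightarrow> i < N \<and> j < N"
    using finite_supp2_bound[OF fc1] by blast
  define d where "d = (\<lambda>a l. \<Sum>j<N. c1 a j * of_nat (j choose l) * b ^ (j - l))"
  have sh1: "\<And>a l. d a l \<noteq> 0 \<Longrightarrow> a < N \<and> l < N \<and> (\<exists>j\<ge>l. c1 a j \<noteq> 0)"
    unfolding d_def by (rule shift_t(1)[where b=b and c=c1 and N=N, OF N])
  have sh2: "\<And>s t. poly2 c1 s (b + t) = poly2 d s t"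
    unfolding d_def by (rule shift_t(2)[where b=b and c=c1 and N=N, OF N])
  have fd: "finite (supp2 d)"
  proof (rule finite_subset[of _ "{..<N}\<times>{..<N}"])
    show "supp2 d \<subseteq> {..<N} \<times> {..<N}"
    proof
      fix p assume "p \<in> supp2 d"
      then obtain i j where "p = (i,j)" "d i j \<noteq> 0" by (auto simp: supp2_def)
      with sh1[of i j] show "p \<in> {..<N} \<times> {..<N}" by simp
    qed
  qed simp
  have hd: "\<And>s t. chart_eq F p (0 + s) ((0 + s) * (b + t)) = poly2 d s t"
    using e(2) sc1 sh2 by simp
  define J where "J = {j. j \<le> m \<and> e (m - j) j \<noteq> 0}"
  have fJ: "finite J" unfolding J_def by simp
  have "m - j0 = i0" using ij(2) by simp
  hence j0J: "j0 \<in> J" using ij unfolding J_def by simp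
  define js where "js = Max J"
  have jsJ: "js \<in> J" unfolding js_def using fJ j0J Max_in by blast
  have jsm: "js \<le> m" and ejs: "e (m - js) js \<noteq> 0" using jsJ unfolding J_def by auto
  have c1js: "c1 m js \<noteq> 0" using jsm ejs by (simp add: c1_def)
  have c1gt: "c1 m l = 0" if "l > js" for l
  proof (cases "l \<le> m")
    case True
    have "l \<notin> J" using that fJ Max_ge js_def by fastforce
    then show ?thesis using True by (simp add: J_def c1_def)
  next
    case False
    then show ?thesis by (simp add: c1_def)
  qed
  have jsN: "js < N" using N[OF c1js] by simp
  have "d m js = c1 m js * of_nat (js choose js) * b ^ (js - js)
      + (\<Sum>j\<in>{..<N} - {js}. c1 m j * of_nat (j choose js) * b ^ (j - js))"
    unfolding d_def using jsN by (subst sum.remove[of _ js]) auto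
  also have "(\<Sum>j\<in>{..<N} - {js}. c1 m j * of_nat (j choose js) * b ^ (j - js)) = 0"
  proof (rule sum.neutral, rule ballI)
    fix j assume "j \<in> {..<N} - {js}"
    hence "j < js \<or> j > js" by auto
    thus "c1 m j * of_nat (j choose js) * b ^ (j - js) = 0"
      using c1gt by (auto simp: binomial_eq_0_iff)
  qed
  finally have "d m js \<noteq> 0" using c1js by simp
  hence "ord_at (\<lambda>s t. chart_eq F p s (s * t)) 0 b \<le> m + js"
    by (rule ord_le[OF fd hd])
  thus ?thesis using jsm unfolding m_def by simp
qed

lemma exc_bound2:
  assumes "hom_poly n F" "F \<noteq> (\<lambda>x y z. 0)"
  shows "ord_at (\<lambda>s t. chart_eq F p (s * t) t) 0 0 \<le> 2 * mult_P2 F p"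
proof -
  define m where "m = mult_P2 F p"
  obtain e where e: "finite (supp2 e)" "\<forall>s t. chart_eq F p s t = poly2 e s t"
    "\<exists>i j. e i j \<noteq> 0 \<and> i + j = m" "\<forall>i j. e i j \<noteq> 0 \<longrightarrow> m \<le> i + j"
    using mult_rep[OF assms, of p] unfolding m_def by metis
  obtain i0 j0 where ij: "e i0 j0 \<noteq> 0" "i0 + j0 = m" using e(3) by blast
  define c2 where "c2 = (\<lambda>a b. if a \<le> b then e a (b - a) else 0)"
  have fc2: "finite (supp2 c2)" and sc2: "\<And>s t. poly2 e (s * t) t = poly2 c2 s t"
    using subst_ts[OF e(1)] unfolding c2_def by blast+
  have hd: "\<And>s t. chart_eq F p ((0 + s) * (0 + t)) (0 + t) = poly2 c2 s t"
    using e(2) sc2 by simp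
  have "c2 i0 (i0 + j0) = e i0 j0" by (simp add: c2_def)
  hence "c2 i0 (i0 + j0) \<noteq> 0" using ij(1) by simp
  hence "ord_at (\<lambda>s t. chart_eq F p (s * t) t) 0 0 \<le> i0 + (i0 + j0)"
    by (rule ord_le[OF fc2 hd])
  thus ?thesis using ij unfolding m_def by simp
qed


lemma top_rep:
  assumes "\<And>i j. e i j \<noteq> 0 \<Longrightarrow> i + j = n"
  shows "poly2 e s t = (\<Sum>i\<le>n. e i (n - i) * s ^ i * t ^ (n - i))"
proof -
  have sub: "supp2 e \<subseteq> (\<lambda>i. (i, n - i)) ` {..n}"
  proof
    fix p assume "p \<in> supp2 e"
    then obtain i j where p: "p = (i,j)" "e i j \<noteq> 0" by (auto simp: supp2_def)
    hence "i + j = n" using assms by blast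
    hence "p = (\<lambda>i. (i, n - i)) i" "i \<in> {..n}" using p by auto
    thus "p \<in> (\<lambda>i. (i, n - i)) ` {..n}" by blast
  qed
  have "poly2 e s t = (\<Sum>(i,j)\<in>(\<lambda>i. (i, n - i)) ` {..n}. e i j * s ^ i * t ^ j)"
    by (rule poly2_superset[OF _ sub]) simp
  also have "\<dots> = (\<Sum>i\<le>n. e i (n - i) * s ^ i * t ^ (n - i))"
    by (subst sum.reindex) (auto simp: inj_on_def)
  finally show ?thesis .
qed

lemma H_hom:
  fixes h :: "nat \<Rightarrow> complex"
  shows "(\<Sum>i\<le>n. h i * (l * U) ^ i * (l * V) ^ (n - i)) = l ^ n * (\<Sum>i\<le>n. h i * U ^ i * V ^ (n - i))"
  unfolding sum_distrib_left
proof (rule sum.cong[OF refl])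
  fix i assume "i \<in> {..n}"
  hence "l ^ n = l ^ i * l ^ (n - i)" by (simp add: power_add[symmetric])
  thus "h i * (l * U) ^ i * (l * V) ^ (n - i) = l ^ n * (h i * U ^ i * V ^ (n - i))"
    by (simp add: power_mult_distrib mult_ac)
qed

lemma F_cont:
  assumes "hom_poly n F"
  shows "isCont (\<lambda>x. F x y z) a" "isCont (\<lambda>y. F x y z) a" "isCont (\<lambda>z. F x y z) a"
proof -
  obtain C where C: "F = (\<lambda>x y z. \<Sum>(i,j)\<in>Tn n. C i j * x ^ i * y ^ j * z ^ (n - i - j))"
    using hom_polyE[OF assms] by blast
  show "isCont (\<lambda>x. F x y z) a" "isCont (\<lambda>y. F x y z) a" "isCont (\<lambda>z. F x y z) a"
    unfolding C by (auto simp: case_prod_unfold intro!: continuous_intros)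
qed


lemma off_lines:
  assumes hom: "hom_poly n F" and F0: "F \<noteq> (\<lambda>x y z. 0)" and q0: "q \<noteq> (0,0,0)"
    and mn: "mult_P2 F q = n"
  shows "union_of_lines_through F q"
proof -
  obtain e where e: "finite (supp2 e)" "\<forall>i j. e i j \<noteq> 0 \<longrightarrow> i + j \<le> n"
    "\<forall>s t. chart_eq F q s t = poly2 e s t"
    "\<exists>i j. e i j \<noteq> 0 \<and> i + j = mult_P2 F q" "\<forall>i j. e i j \<noteq> 0 \<longrightarrow> mult_P2 F q \<le> i + j"
    using mult_rep[OF hom F0, of q] by metis
  have top: "\<And>i j. e i j \<noteq> 0 \<Longrightarrow> i + j = n" using e(2,5) mn by force
  define h where "h = (\<lambda>i. e i (n - i))"
  define H where "H = (\<lambda>U V. \<Sum>i\<le>n. h i * U ^ i * V ^ (n - i))"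
  obtain i0 j0 where ij: "e i0 j0 \<noteq> 0" "i0 + j0 = n" using e(4) mn by blast
  have i0: "i0 \<le> n" "h i0 \<noteq> 0" using ij by (auto simp: h_def)
  have gH: "chart_eq F q s t = H s t" for s t
    using e(3) top_rep[of e n s t] top unfolding H_def h_def by simp
  have Hh: "H (l * U) (l * V) = l ^ n * H U V" for l U V unfolding H_def by (rule H_hom)
  obtain p0 p1 p2 where q: "q = (p0, p1, p2)" by (cases q) auto
  show ?thesis
  proof (cases "p0 \<noteq> 0")
    case True
    define a where "a = p1 / p0"
    define b where "b = p2 / p0"
    define L1 where "L1 = (-a, 1::complex, 0::complex)"
    define L2 where "L2 = (-b, 0::complex, 1::complex)"
    have FH: "F x y z = H (linf L1 x y z) (linf L2 x y z)" for x y z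
    proof -
      have nz: "F x y z = H (linf L1 x y z) (linf L2 x y z)" if "x \<noteq> 0" for x
      proof -
        have "F x y z = F (x * 1) (x * (y / x)) (x * (z / x))" using that by simp
        also have "\<dots> = x ^ n * F 1 (y / x) (z / x)" by (rule hom_scale[OF hom])
        also have "F 1 (y / x) (z / x) = chart_eq F q (y / x - a) (z / x - b)"
          using True by (simp add: chart_eq_def q a_def b_def)
        also have "\<dots> = H (y / x - a) (z / x - b)" by (rule gH)
        also have "x ^ n * \<dots> = H (x * (y / x - a)) (x * (z / x - b))" by (rule Hh[symmetric])
        also have "x * (y / x - a) = linf L1 x y z" using that by (simp add: L1_def linf_def field_simps)
        also have "x * (z / x - b) = linf L2 x y z" using that by (simp add: L2_def linf_def field_simps)
        finally show ?thesis .
      qed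
      have "F 0 y z = H (linf L1 0 y z) (linf L2 0 y z)"
        by (rule ext0[where f = "\<lambda>x. F x y z" and g = "\<lambda>x. H (linf L1 x y z) (linf L2 x y z)"])
           (use F_cont[OF hom] nz in \<open>auto simp: H_def linf_def intro!: continuous_intros\<close>)
      thus ?thesis using nz by (cases "x = 0") auto
    qed
    show ?thesis unfolding q
      by (rule lines_from_form[where ?L1.0 = L1 and ?L2.0 = L2 and h = h and ?i0.0 = i0 and n = n, OF i0])
         (use FH True in \<open>auto simp: H_def linf_def L1_def L2_def comb_def a_def b_def\<close>)
  next
    case False
    show ?thesis
    proof (cases "p1 \<noteq> 0")
      case True
      define c where "c = p2 / p1"
      define L1 where "L1 = (1::complex, 0::complex, 0::complex)"
      define L2 where "L2 = (0::complex, -c, 1::complex)"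
      have FH: "F x y z = H (linf L1 x y z) (linf L2 x y z)" for x y z
      proof -
        have nz: "F x y z = H (linf L1 x y z) (linf L2 x y z)" if "y \<noteq> 0" for y
        proof -
          have "F x y z = F (y * (x / y)) (y * 1) (y * (z / y))" using that by simp
          also have "\<dots> = y ^ n * F (x / y) 1 (z / y)" by (rule hom_scale[OF hom])
          also have "F (x / y) 1 (z / y) = chart_eq F q (x / y) (z / y - c)"
            using True False by (simp add: chart_eq_def q c_def)
          also have "\<dots> = H (x / y) (z / y - c)" by (rule gH)
          also have "y ^ n * \<dots> = H (y * (x / y)) (y * (z / y - c))" by (rule Hh[symmetric])
          also have "y * (x / y) = linf L1 x y z" using that by (simp add: L1_def linf_def field_simps)
          also have "y * (z / y - c) = linf L2 x y z" using that by (simp add: L2_def linf_def field_simps)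
          finally show ?thesis .
        qed
        have "F x 0 z = H (linf L1 x 0 z) (linf L2 x 0 z)"
          by (rule ext0[where f = "\<lambda>y. F x y z" and g = "\<lambda>y. H (linf L1 x y z) (linf L2 x y z)"])
             (use F_cont[OF hom] nz in \<open>auto simp: H_def linf_def intro!: continuous_intros\<close>)
        thus ?thesis using nz by (cases "y = 0") auto
      qed
      show ?thesis unfolding q
        by (rule lines_from_form[where ?L1.0 = L1 and ?L2.0 = L2 and h = h and ?i0.0 = i0 and n = n, OF i0])
           (use FH True False in \<open>auto simp: H_def linf_def L1_def L2_def comb_def c_def\<close>)
    next
      case False2: False
      define L1 where "L1 = (1::complex, 0::complex, 0::complex)"
      define L2 where "L2 = (0::complex, 1::complex, 0::complex)"
      have FH: "F x y z = H (linf L1 x y z) (linf L2 x y z)" for x y z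
      proof -
        have nz: "F x y z = H (linf L1 x y z) (linf L2 x y z)" if "z \<noteq> 0" for z
        proof -
          have "F x y z = F (z * (x / z)) (z * (y / z)) (z * 1)" using that by simp
          also have "\<dots> = z ^ n * F (x / z) (y / z) 1" by (rule hom_scale[OF hom])
          also have "F (x / z) (y / z) 1 = chart_eq F q (x / z) (y / z)"
            using False2 False by (simp add: chart_eq_def q)
          also have "\<dots> = H (x / z) (y / z)" by (rule gH)
          also have "z ^ n * \<dots> = H (z * (x / z)) (z * (y / z))" by (rule Hh[symmetric])
          also have "z * (x / z) = linf L1 x y z" using that by (simp add: L1_def linf_def field_simps)
          also have "z * (y / z) = linf L2 x y z" using that by (simp add: L2_def linf_def field_simps)
          finally show ?thesis .
        qed
        have "F x y 0 = H (linf L1 x y 0) (linf L2 x y 0)"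
          by (rule ext0[where f = "\<lambda>z. F x y z" and g = "\<lambda>z. H (linf L1 x y z) (linf L2 x y z)"])
             (use F_cont[OF hom] nz in \<open>auto simp: H_def linf_def intro!: continuous_intros\<close>)
        thus ?thesis using nz by (cases "z = 0") auto
      qed
      show ?thesis unfolding q
        by (rule lines_from_form[where ?L1.0 = L1 and ?L2.0 = L2 and h = h and ?i0.0 = i0 and n = n, OF i0])
           (use FH False2 False in \<open>auto simp: H_def linf_def L1_def L2_def comb_def\<close>)
    qed
  qed
qed


theorem lemma2:
  fixes r k :: nat and P :: "nat \<Rightarrow> pt3" and F :: form3 and Q :: bpt
  assumes "1 \<le> r" and "r \<le> 8" and "general_position r P" and "0 < k"
    and "hom_poly (3 * k) F" and "F \<noteq> (\<lambda>x y z. 0)"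
    and "\<forall>i\<in>{1..r}. k \<le> mult_P2 F (P i)"
    and "point_of_Sr r P Q"
  shows "(on_exc Q \<longrightarrow> mult_Sr k F P Q \<le> 2 * int (mult_P2 F (fmap P Q)) - int k)
       \<and> (\<not> on_exc Q \<longrightarrow>
            mult_Sr k F P Q = int (mult_P2 F (fmap P Q))
          \<and> mult_P2 F (fmap P Q) \<le> 3 * k
          \<and> (mult_Sr k F P Q = int (3 * k) \<longrightarrow> union_of_lines_through F (fmap P Q)))"
proof (cases Q)
  case (Off q)
  have q0: "q \<noteq> (0,0,0)" using assms(8) by (simp add: Off point_of_Sr_def)
  obtain e where e: "finite (supp2 e)" "\<forall>i j. e i j \<noteq> 0 \<longrightarrow> i + j \<le> 3 * k"
    "\<forall>s t. chart_eq F q s t = poly2 e s t"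
    "\<exists>i j. e i j \<noteq> 0 \<and> i + j = mult_P2 F q" "\<forall>i j. e i j \<noteq> 0 \<longrightarrow> mult_P2 F q \<le> i + j"
    using mult_rep[OF assms(5,6), of q] by metis
  have le: "mult_P2 F q \<le> 3 * k" using e(2,4) by force
  have "mult_P2 F q = 3 * k \<Longrightarrow> union_of_lines_through F q"
    by (rule off_lines[OF assms(5,6) q0])
  then show ?thesis using le by (simp add: Off on_exc_def mult_Sr_def fmap_def)
next
  case (Exc i d)
  obtain \<alpha> \<beta> where d: "d = (\<alpha>, \<beta>)" by (cases d) auto
  have b1: "ord_at (\<lambda>s t. chart_eq F (P i) s (s * t)) 0 (\<beta> / \<alpha>) \<le> 2 * mult_P2 F (P i)"
    by (rule exc_bound1[OF assms(5,6)])
  have b2: "ord_at (\<lambda>s t. chart_eq F (P i) (s * t) t) 0 0 \<le> 2 * mult_P2 F (P i)"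
    by (rule exc_bound2[OF assms(5,6)])
  show ?thesis using b1 b2 by (simp add: Exc d on_exc_def mult_Sr_def fmap_def)
qed

end
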